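(* Let $k=k(n)$ be integers with $0\le k(n)<n$, where $k(n)$ is either bounded or tends to infinity. Then $$\lim_{n\to\infty}\frac{\|\binom nk\chi_R^{(n)}\|}{\|\chi_{\beta_{X_n^k}}\|}=\lim_{n\to\infty}\frac{\|2^n\chi_R^{(n)}\|}{\|\chi_{\beta_{B_n}}\|}=1,$$ $$\lim_{n\to\infty}\frac{\langle\chi_R^{(n)},\chi_{\beta_{X_n^k}}\rangle}{\|\chi_R^{(n)}\|\cdot\|\chi_{\beta_{X_n^k}}\|}=\lim_{n\to\infty}\frac{\langle\chi_R^{(n)},\chi_{\beta_{B_n}}\rangle}{\|\chi_R^{(n)}\|\cdot\|\chi_{\beta_{B_n}}\|}=1 .$$
   Context: $B_n$ is the group of $n\times n$ monomial matrices with nonzero entries in $\{\pm1\}$; $S_n\le B_n$ via permutation matrices. $X_n^k$ is the set of matrices in $B_n$ with exactly $k$ entries equal to $-1$. $\chi_{\beta_{X_n^k}}$ (resp. $\chi_{\beta_{B_n}}$) is the character of the permutation representation of $S_n$ on $X_n^k$ (resp. $B_n$) given by $\pi\circ A=\pi A\pi^{-1}$. $\chi_R^{(n)}$ is the regular character of $S_n$; $\langle\chi_1,\chi_2\rangle=\frac1{n!}\sum_{\pi\in S_n}\chi_1(\pi)\overline{\chi_2(\pi)}$ and $\|\chi\|=\langle\chi,\chi\rangle^{1/2}$. *)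

theory Defs
  imports Complex_Main "HOL-Combinatorics.Permutations"
begin

text \<open>n x n integer matrices are represented as functions nat => nat => int,
  with all entries outside the index range {..<n} x {..<n} equal to 0.\<close>

definition mat_mult :: "nat \<Rightarrow> (nat \<Rightarrow> nat \<Rightarrow> int) \<Rightarrow> (nat \<Rightarrow> nat \<Rightarrow> int) \<Rightarrow> (nat \<Rightarrow> nat \<Rightarrow> int)" where
  "mat_mult n A B = (\<lambda>i j. \<Sum>l<n. A i l * B l j)"

definition perm_mat :: "nat \<Rightarrow> (nat \<Rightarrow> nat) \<Rightarrow> (nat \<Rightarrow> nat \<Rightarrow> int)" where
  "perm_mat n \<pi> = (\<lambda>i j. if i < n \<and> j < n \<and> i = \<pi> j then 1 else 0)"

definition Bn :: "nat \<Rightarrow> (nat \<Rightarrow> nat \<Rightarrow> int) set" where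
  "Bn n = {A. (\<forall>i j. (n \<le> i \<or> n \<le> j) \<longrightarrow> A i j = 0)
             \<and> (\<forall>i j. A i j \<in> {-1, 0, 1})
             \<and> (\<forall>i<n. \<exists>!j. j < n \<and> A i j \<noteq> 0)
             \<and> (\<forall>j<n. \<exists>!i. i < n \<and> A i j \<noteq> 0)}"

definition Xnk :: "nat \<Rightarrow> nat \<Rightarrow> (nat \<Rightarrow> nat \<Rightarrow> int) set" where
  "Xnk n k = {A \<in> Bn n. card {(i, j). i < n \<and> j < n \<and> A i j = -1} = k}"

text \<open>Conjugation action pi o A = P_pi A P_pi^{-1} (P_pi^{-1} = P_{pi^{-1}}).\<close>
definition conj_act :: "nat \<Rightarrow> (nat \<Rightarrow> nat) \<Rightarrow> (nat \<Rightarrow> nat \<Rightarrow> int) \<Rightarrow> (nat \<Rightarrow> nat \<Rightarrow> int)" where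
  "conj_act n \<pi> A = mat_mult n (mat_mult n (perm_mat n \<pi>) A) (perm_mat n (inv \<pi>))"

definition perm_char :: "nat \<Rightarrow> (nat \<Rightarrow> nat \<Rightarrow> int) set \<Rightarrow> (nat \<Rightarrow> nat) \<Rightarrow> real" where
  "perm_char n Y \<pi> = real (card {A \<in> Y. conj_act n \<pi> A = A})"

definition reg_char :: "nat \<Rightarrow> (nat \<Rightarrow> nat) \<Rightarrow> real" where
  "reg_char n \<pi> = (if \<pi> = id then fact n else 0)"

definition char_inner :: "nat \<Rightarrow> ((nat \<Rightarrow> nat) \<Rightarrow> real) \<Rightarrow> ((nat \<Rightarrow> nat) \<Rightarrow> real) \<Rightarrow> real" where
  "char_inner n f g = (\<Sum>\<pi> | \<pi> permutes {..<n}. f \<pi> * g \<pi>) / fact n"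

definition char_norm :: "nat \<Rightarrow> ((nat \<Rightarrow> nat) \<Rightarrow> real) \<Rightarrow> real" where
  "char_norm n f = sqrt (char_inner n f f)"

end

theory Submission
  imports Defs "HOL-Combinatorics.Orbits"
begin


definition cent :: "nat set \<Rightarrow> (nat \<Rightarrow> nat) \<Rightarrow> (nat \<Rightarrow> nat) set" where
  "cent S d = {s. s permutes S \<and> s \<circ> d = d \<circ> s}"

definition der :: "nat set \<Rightarrow> (nat \<Rightarrow> nat) set" where
  "der S = {d. d permutes S \<and> (\<forall>y\<in>S. d y \<noteq> y)}"

definition DD :: "nat set \<Rightarrow> nat" where
  "DD S = (\<Sum>d\<in>der S. card (cent S d) ^ 2)"

lemma finite_cent: "finite S \<Longrightarrow> finite (cent S d)"
  by (rule finite_subset[OF _ finite_permutations[of S]]) (auto simp: cent_def)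

lemma finite_der: "finite S \<Longrightarrow> finite (der S)"
  by (rule finite_subset[OF _ finite_permutations[of S]]) (auto simp: der_def)

lemma funpow_comm: "s \<circ> d = d \<circ> s \<Longrightarrow> s ((d ^^ n) y) = (d ^^ n) (s y)"
proof (induction n arbitrary: y)
  case 0 then show ?case by simp
next
  case (Suc n)
  have "s ((d ^^ Suc n) y) = s (d ((d ^^ n) y))" by simp
  also have "\<dots> = d (s ((d ^^ n) y))" using Suc.prems by (metis comp_apply)
  also have "\<dots> = d ((d ^^ n) (s y))" using Suc by simp
  finally show ?case by simp
qed

lemma inv_comm:
  assumes "s0 permutes S" "s0 \<circ> d = d \<circ> s0"
  shows "inv s0 \<circ> d = d \<circ> inv s0"
proof
  fix y
  obtain z where z: "s0 z = y" using permutes_surj[OF assms(1)] by (metis surjD)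
  have "inv s0 y = z" using z permutes_inverses[OF assms(1)] by auto
  moreover have "s0 (d z) = d y" using assms(2) z by (metis comp_apply)
  hence "inv s0 (d y) = d z" using permutes_inverses[OF assms(1)] by metis
  ultimately show "(inv s0 \<circ> d) y = (d \<circ> inv s0) y" by simp
qed

lemma cent_bound:
  assumes fin: "finite S" and dp: "d permutes S" and xS: "x \<in> S"
  shows "card (cent S d) \<le> card S * card (cent (S - orbit d x) (perm_restrict d (S - orbit d x)))"
proof -
  define C where "C = orbit d x"
  define d' where "d' = perm_restrict d (S - C)"
  define G where "G = cent S d"
  define St where "St = {s\<in>G. s x = x}"
  have perm: "permutation d" using dp fin permutation_permutes by blast
  have finG: "finite G" unfolding G_def using fin by (rule finite_cent)
  have StC: "St \<subseteq> cent (S - C) d'"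
  proof
    fix s assume "s \<in> St"
    hence sp: "s permutes S" and sc: "s \<circ> d = d \<circ> s" and sx: "s x = x"
      by (auto simp: St_def G_def cent_def)
    have fixC: "s y = y" if yC: "y \<in> C" for y
    proof -
      obtain n where "y = (d ^^ n) x" using yC unfolding C_def orbit_altdef_permutation[OF perm] by blast
      thus ?thesis using funpow_comm[OF sc] sx by simp
    qed
    have sp': "s permutes (S - C)"
      using sp fixC unfolding permutes_def by (metis Diff_iff)
    have "s \<circ> d' = d' \<circ> s"
    proof
      fix y
      show "(s \<circ> d') y = (d' \<circ> s) y"
      proof (cases "y \<in> S - C")
        case True
        have "s y \<in> S" using True permutes_in_image[OF sp] by auto
        moreover have "s y \<notin> C"
        proof
          assume "s y \<in> C"
          hence "s (s y) = s y" using fixC by auto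
          hence "s y = y" using permutes_inj[OF sp] by (meson injD)
          thus False using True \<open>s y \<in> C\<close> by auto
        qed
        ultimately show ?thesis using True sc unfolding d'_def
          by (simp add: perm_restrict_simps) (metis comp_apply)
      next
        case False
        hence "d' y = y" unfolding d'_def by (simp add: perm_restrict_simps)
        moreover have "s y = y" using False fixC permutes_not_in[OF sp] by auto
        ultimately show ?thesis by simp
      qed
    qed
    thus "s \<in> cent (S - C) d'" using sp' by (simp add: cent_def)
  qed
  have fib: "card {s\<in>G. s x = y} \<le> card St" for y
  proof (cases "{s\<in>G. s x = y} = {}")
    case True thus ?thesis by (metis card.empty le0)
  next
    case False
    then obtain s0 where s0: "s0 \<in> G" "s0 x = y" by auto
    hence s0p: "s0 permutes S" and s0c: "s0 \<circ> d = d \<circ> s0" by (auto simp: G_def cent_def)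
    have "inj_on (\<lambda>s. inv s0 \<circ> s) {s\<in>G. s x = y}"
    proof (rule inj_onI)
      fix s1 s2 assume "inv s0 \<circ> s1 = inv s0 \<circ> s2"
      hence "s0 \<circ> (inv s0 \<circ> s1) = s0 \<circ> (inv s0 \<circ> s2)" by simp
      thus "s1 = s2" using permutes_inv_o(1)[OF s0p] by (simp add: o_assoc)
    qed
    moreover have "(\<lambda>s. inv s0 \<circ> s) ` {s\<in>G. s x = y} \<subseteq> St"
    proof
      fix t assume "t \<in> (\<lambda>s. inv s0 \<circ> s) ` {s\<in>G. s x = y}"
      then obtain s where s: "s \<in> G" "s x = y" "t = inv s0 \<circ> s" by auto
      have "t permutes S" using s permutes_compose[of s S "inv s0"] permutes_inv[OF s0p]
        by (auto simp: G_def cent_def)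
      moreover have "t \<circ> d = d \<circ> t" using s inv_comm[OF s0p s0c]
        by (auto simp: G_def cent_def) (metis comp_assoc)
      moreover have "t x = x" using s s0 permutes_inverses(2)[OF s0p] by (metis comp_apply)
      ultimately show "t \<in> St" by (simp add: St_def G_def cent_def)
    qed
    moreover have "finite St" using finG by (simp add: St_def)
    ultimately show ?thesis by (rule card_inj_on_le)
  qed
  have "G = (\<Union>y\<in>S. {s\<in>G. s x = y})"
    using xS by (auto simp: G_def cent_def permutes_in_image)
  hence "card G \<le> (\<Sum>y\<in>S. card {s\<in>G. s x = y})"
    using card_UN_le[OF fin] by metis
  also have "\<dots> \<le> (\<Sum>y\<in>S. card St)" by (rule sum_mono) (rule fib)
  also have "\<dots> = card S * card St" by simp
  also have "\<dots> \<le> card S * card (cent (S - C) d')"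
    using StC finite_cent[of "S - C" d'] fin by (intro mult_le_mono2 card_mono) auto
  finally show ?thesis by (simp add: G_def C_def d'_def)
qed



definition ListOf :: "(nat \<Rightarrow> nat) \<Rightarrow> nat \<Rightarrow> nat list" where
  "ListOf d x = map (\<lambda>i. (d ^^ i) x) [1..<funpow_dist1 d x x]"

lemma orbit_facts:
  assumes fin: "finite S" and dp: "d permutes S" and xS: "x \<in> S"
  shows "orbit d x = insert x (set (ListOf d x))" "distinct (ListOf d x)"
    "x \<notin> set (ListOf d x)" "set (ListOf d x) \<subseteq> S" "d x \<noteq> x \<Longrightarrow> ListOf d x \<noteq> []"
proof -
  have perm: "permutation d" using dp fin permutation_permutes by blast
  have xo: "x \<in> orbit d x" using perm by (rule permutation_self_in_orbit)
  define l where "l = funpow_dist1 d x x"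
  have o2: "orbit d x = (\<lambda>n. (d ^^ n) x) ` {0..<l}" unfolding l_def by (rule orbit_conv_funpow_dist1[OF xo])
  have o3: "inj_on (\<lambda>n. (d ^^ n) x) {0..<l}" unfolding l_def by (rule inj_on_funpow_dist1[OF xo])
  have o4: "(d ^^ l) x = x" unfolding l_def by (rule funpow_dist1_prop[OF xo])
  have L: "ListOf d x = map (\<lambda>n. (d ^^ n) x) [1..<l]" by (simp add: ListOf_def l_def)
  have l1: "l \<ge> 1" by (simp add: l_def)
  have "{0..<l} = insert 0 {1..<l}" using l1 by auto
  thus "orbit d x = insert x (set (ListOf d x))" using o2 L by auto
  show "distinct (ListOf d x)" unfolding L using o3 by (auto simp: distinct_map intro: inj_on_subset)
  show "x \<notin> set (ListOf d x)"
  proof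
    assume "x \<in> set (ListOf d x)"
    then obtain i where i: "i \<in> {1..<l}" "(d ^^ i) x = x" unfolding L by auto
    hence "(d ^^ i) x = (d ^^ 0) x" by simp
    have "i = 0" by (rule inj_onD[OF o3 \<open>(d ^^ i) x = (d ^^ 0) x\<close>]) (use i l1 in auto)
    thus False using i by simp
  qed
  show "set (ListOf d x) \<subseteq> S" using permutes_orbit_subset[OF dp xS] o2 L by auto
  show "ListOf d x \<noteq> []" if "d x \<noteq> x"
  proof
    assume "ListOf d x = []"
    hence "l \<le> 1" unfolding L by (cases "l \<le> 1") auto
    hence "l = 1" using l1 by simp
    thus False using o4 that by simp
  qed
qed

lemma ListOf_nth:
  assumes "x \<in> orbit d x" "0 < i" "i < funpow_dist1 d x x"
  shows "ListOf d x ! (i - 1) = (d ^^ i) x"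
proof -
  have "[1..<funpow_dist1 d x x] ! (i-1) = 1 + (i-1)" by (rule nth_upt) (use assms in linarith)
  thus ?thesis using assms unfolding ListOf_def by (subst nth_map) auto
qed

lemma length_ListOf: "length (ListOf d x) = funpow_dist1 d x x - 1"
  by (simp add: ListOf_def)

lemma key_inj:
  assumes fin: "finite S" and xS: "x \<in> S"
  shows "inj_on (\<lambda>d. (ListOf d x, perm_restrict d (S - orbit d x))) {d. d permutes S}"
proof (rule inj_onI)
  fix d1 d2 assume d1: "d1 \<in> {d. d permutes S}" and d2: "d2 \<in> {d. d permutes S}"
    and eq: "(ListOf d1 x, perm_restrict d1 (S - orbit d1 x)) = (ListOf d2 x, perm_restrict d2 (S - orbit d2 x))"
  have p1: "d1 permutes S" and p2: "d2 permutes S" using d1 d2 by auto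
  have perm1: "permutation d1" using p1 fin permutation_permutes by blast
  have perm2: "permutation d2" using p2 fin permutation_permutes by blast
  have xo1: "x \<in> orbit d1 x" using perm1 by (rule permutation_self_in_orbit)
  have xo2: "x \<in> orbit d2 x" using perm2 by (rule permutation_self_in_orbit)
  define l where "l = funpow_dist1 d1 x x"
  have "funpow_dist1 d2 x x = l"
    using eq length_ListOf[of d1 x] length_ListOf[of d2 x] by (simp add: l_def)
  note l2 = this
  have same: "(d1 ^^ i) x = (d2 ^^ i) x" if "i \<le> l" for i
  proof (cases "i = 0")
    case True thus ?thesis by simp
  next
    case False
    show ?thesis
    proof (cases "i = l")
      case True thus ?thesis using funpow_dist1_prop[OF xo1] funpow_dist1_prop[OF xo2] l2 l_def by simp
    next
      case False
      hence "i < l" using that by simp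
      thus ?thesis using ListOf_nth[OF xo1, of i] ListOf_nth[OF xo2, of i] \<open>i \<noteq> 0\<close> eq l2 l_def by auto
    qed
  qed
  have C: "orbit d1 x = orbit d2 x"
    using orbit_conv_funpow_dist1[OF xo1] orbit_conv_funpow_dist1[OF xo2] l2 same
    unfolding l_def[symmetric] by (auto intro!: image_cong)
  show "d1 = d2"
  proof
    fix y
    show "d1 y = d2 y"
    proof (cases "y \<in> orbit d1 x")
      case True
      then obtain i where i: "i < l" "y = (d1 ^^ i) x"
        using orbit_conv_funpow_dist1[OF xo1] unfolding l_def by auto
      have "d1 y = (d1 ^^ Suc i) x" using i by simp
      also have "\<dots> = (d2 ^^ Suc i) x" by (rule same) (use i in simp)
      also have "\<dots> = d2 y" using same[of i] i by simp
      finally show ?thesis .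
    next
      case False
      show ?thesis
      proof (cases "y \<in> S")
        case True
        have "perm_restrict d1 (S - orbit d1 x) y = perm_restrict d2 (S - orbit d2 x) y" using eq by simp
        thus ?thesis using True False C by (simp add: perm_restrict_simps)
      next
        case False
        thus ?thesis using permutes_not_in[OF p1] permutes_not_in[OF p2] by simp
      qed
    qed
  qed
qed

lemma DD_rec:
  assumes fin: "finite S" and xS: "x \<in> S"
    and IH: "\<And>S'. S' \<subset> S \<Longrightarrow> DD S' \<le> fact (card S') ^ 2"
  shows "DD S \<le> card S ^ 2 * fact (card S - 1) * (\<Sum>i<card S - 1. fact i)"
proof -
  define m where "m = card S"
  define A where "A = S - {x}"
  define Lists where "Lists = {L. L \<noteq> [] \<and> distinct L \<and> set L \<subseteq> A}"
  define key where "key = (\<lambda>d. (ListOf d x, perm_restrict d (S - orbit d x)))"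
  define h where "h = (\<lambda>L d'. m^2 * card (cent (S - insert x (set L)) d')^2)"
  have finA: "finite A" using fin by (simp add: A_def)
  have m1: "m \<ge> 1" using fin xS by (simp add: m_def Suc_le_eq card_gt_0_iff) blast
  have cardA: "card A = m - 1" using fin xS by (simp add: A_def m_def)
  have lenL: "length L = card (set L)" if "L \<in> Lists" for L
    using that by (simp add: Lists_def distinct_card)
  have finL: "finite Lists"
  proof (rule finite_subset[OF _ finite_lists_length_le[OF finA, of "card A"]])
    show "Lists \<subseteq> {xs. set xs \<subseteq> A \<and> length xs \<le> card A}"
      using lenL finA by (auto simp: Lists_def intro: card_mono)
  qed
  have orb: "orbit d x = insert x (set (ListOf d x))" if "d \<in> der S" for d
    using orbit_facts(1)[OF fin _ xS] that by (simp add: der_def)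
  have "DD S \<le> (\<Sum>d\<in>der S. case_prod h (key d))"
    unfolding DD_def
  proof (rule sum_mono)
    fix d assume d: "d \<in> der S"
    have "card (cent S d) \<le> m * card (cent (S - orbit d x) (perm_restrict d (S - orbit d x)))"
      using cent_bound[OF fin _ xS] d by (simp add: der_def m_def)
    hence "card (cent S d) ^ 2 \<le> (m * card (cent (S - orbit d x) (perm_restrict d (S - orbit d x)))) ^ 2"
      by (rule power_mono) simp
    thus "card (cent S d) ^ 2 \<le> case_prod h (key d)"
      using orb[OF d] by (simp add: h_def key_def power_mult_distrib)
  qed
  also have "\<dots> = (\<Sum>p\<in>key ` der S. case_prod h p)"
  proof (rule sum.reindex[symmetric, unfolded comp_def])
    show "inj_on key (der S)"
      using key_inj[OF fin xS] unfolding key_def by (rule inj_on_subset) (auto simp: der_def)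
  qed
  also have "\<dots> \<le> (\<Sum>p\<in>Sigma Lists (\<lambda>L. der (S - insert x (set L))). case_prod h p)"
  proof (rule sum_mono2)
    show "finite (Sigma Lists (\<lambda>L. der (S - insert x (set L))))"
      using finL fin by (intro finite_SigmaI finite_der) auto
    show "key ` der S \<subseteq> Sigma Lists (\<lambda>L. der (S - insert x (set L)))"
    proof
      fix p assume "p \<in> key ` der S"
      then obtain d where d: "d \<in> der S" and p: "p = key d" by auto
      have dp: "d permutes S" and dn: "\<forall>y\<in>S. d y \<noteq> y" using d by (auto simp: der_def)
      have "ListOf d x \<in> Lists"
        using orbit_facts[OF fin dp xS] dn xS by (auto simp: Lists_def A_def)
      moreover have "perm_restrict d (S - orbit d x) \<in> der (S - insert x (set (ListOf d x)))"
      proof -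
        have "perm_restrict d (S - orbit d x) permutes (S - orbit d x)"
          by (rule perm_restrict_diff_cyclic[OF dp cyclic_on_orbit[OF dp fin]])
        moreover have "\<forall>y\<in>S - orbit d x. perm_restrict d (S - orbit d x) y \<noteq> y"
          using dn by (simp add: perm_restrict_simps)
        ultimately show ?thesis using orb[OF d] by (simp add: der_def)
      qed
      ultimately show "p \<in> Sigma Lists (\<lambda>L. der (S - insert x (set L)))"
        using p by (simp add: key_def)
    qed
  qed simp
  also have "\<dots> = (\<Sum>L\<in>Lists. m^2 * DD (S - insert x (set L)))"
    unfolding DD_def h_def sum_distrib_left
    using finL fin by (subst sum.Sigma) (auto intro: finite_der)
  also have "\<dots> \<le> (\<Sum>L\<in>Lists. m^2 * fact (m - 1 - length L) ^ 2)"
  proof (rule sum_mono)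
    fix L assume L: "L \<in> Lists"
    have sub: "insert x (set L) \<subseteq> S" using L xS by (auto simp: Lists_def A_def)
    have xn: "x \<notin> set L" using L by (auto simp: Lists_def A_def)
    have "card (S - insert x (set L)) = m - 1 - length L"
      using card_Diff_subset[OF _ sub] fin xn lenL[OF L] finite_subset[OF sub fin]
      by (simp add: m_def)
    moreover have "S - insert x (set L) \<subset> S" using xS by auto
    ultimately show "m^2 * DD (S - insert x (set L)) \<le> m^2 * fact (m - 1 - length L) ^ 2"
      using IH by (metis mult_le_mono2)
  qed
  also have "\<dots> = (\<Sum>j\<in>{1..<m}. (\<Sum>L\<in>{L\<in>Lists. length L = j}. m^2 * fact (m - 1 - length L) ^ 2))"
  proof (rule sum.group[symmetric, OF finL])
    show "length ` Lists \<subseteq> {1..<m}"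
    proof
      fix j assume "j \<in> length ` Lists"
      then obtain L where L: "L \<in> Lists" "j = length L" by auto
      have "card (set L) \<le> card A" using L finA by (intro card_mono) (auto simp: Lists_def)
      moreover have "length L \<ge> 1" using L by (cases L) (auto simp: Lists_def)
      ultimately show "j \<in> {1..<m}" using m1 L lenL[OF L(1)] cardA
        by (auto simp: Lists_def)
    qed
  qed simp
  also have "\<dots> = (\<Sum>j\<in>{1..<m}. m^2 * fact (m - 1) * fact (m - 1 - j))"
  proof (rule sum.cong[OF refl])
    fix j assume j: "j \<in> {1..<m}"
    have eqs: "{L\<in>Lists. length L = j} = {xs. length xs = j \<and> distinct xs \<and> set xs \<subseteq> A}"
      using j by (auto simp: Lists_def)
    have c: "card {L\<in>Lists. length L = j} = \<Prod>{card A - j + 1 .. card A}"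
      unfolding eqs using j cardA by (intro card_lists_distinct_length_eq finA) auto
    have f: "fact (m - 1) = fact (m - 1 - j) * \<Prod>{Suc (m - 1 - j)..m - 1}"
      by (rule fact_eq_fact_times) simp
    have "Suc (m - 1 - j) = card A - j + 1" using j cardA by simp
    hence "(\<Sum>L\<in>{L\<in>Lists. length L = j}. m^2 * fact (m - 1 - length L) ^ 2)
        = \<Prod>{card A - j + 1 .. card A} * (m^2 * fact (m - 1 - j) ^ 2)"
      using c by simp
    also have "\<dots> = m^2 * fact (m - 1) * fact (m - 1 - j)"
      using f \<open>Suc (m - 1 - j) = card A - j + 1\<close> cardA by (simp add: power2_eq_square)
    finally show "(\<Sum>L\<in>{L\<in>Lists. length L = j}. m^2 * fact (m - 1 - length L) ^ 2)
        = m^2 * fact (m - 1) * fact (m - 1 - j)" .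
  qed
  also have "\<dots> = m^2 * fact (m - 1) * (\<Sum>j\<in>{1..<m}. fact (m - 1 - j))"
    by (simp add: sum_distrib_left)
  also have "(\<Sum>j\<in>{1..<m}. fact (m - 1 - j)) = (\<Sum>i<m - 1. fact i :: nat)"
  proof -
    have "{1..<m} = {1..m - 1}" using m1 by auto
    hence "{1..<m} = Suc ` {..<m - 1}" by (simp add: image_Suc_lessThan)
    hence "(\<Sum>j\<in>{1..<m}. fact (m - 1 - j)) = (\<Sum>i<m - 1. fact (m - 1 - Suc i) :: nat)"
      by (simp add: sum.reindex)
    also have "\<dots> = (\<Sum>i<m - 1. fact i)" by (rule sum.nat_diff_reindex)
    finally show ?thesis .
  qed
  finally show ?thesis by (simp add: m_def)
qed



lemma sum_fact_le: "(\<Sum>i<k. fact i :: nat) \<le> fact k"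
proof (induction k)
  case 0 then show ?case by simp
next
  case (Suc k)
  show ?case
  proof (cases k)
    case 0 then show ?thesis by simp
  next
    case (Suc j)
    have "(\<Sum>i<Suc k. fact i :: nat) = (\<Sum>i<k. fact i) + fact k" by simp
    also have "\<dots> \<le> fact k + fact k" using \<open>(\<Sum>i<k. fact i) \<le> fact k\<close> by simp
    also have "\<dots> \<le> fact (Suc k)"
    proof -
      have "fact (Suc k) = (Suc k) * (fact k :: nat)" by simp
      thus ?thesis using Suc by simp
    qed
    finally show ?thesis .
  qed
qed

lemma sum_fact_le2: "k \<ge> 1 \<Longrightarrow> (\<Sum>i<k. fact i :: nat) \<le> 2 * fact (k - 1)"
proof -
  assume "k \<ge> 1"
  then obtain j where k: "k = Suc j" by (cases k) auto
  have "(\<Sum>i<k. fact i :: nat) = (\<Sum>i<j. fact i) + fact j" using k by simp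
  also have "\<dots> \<le> fact j + fact j" using sum_fact_le[of j] by simp
  finally show ?thesis using k by simp
qed

lemma der_empty: "der {} = {id}"
  by (auto simp: der_def permutes_empty)

lemma cent_empty: "cent {} id = {id}"
  by (auto simp: cent_def permutes_empty)

lemma DD_le: "finite S \<Longrightarrow> DD S \<le> fact (card S) ^ 2"
proof (induction S rule: finite_psubset_induct)
  case (psubset S)
  show ?case
  proof (cases "S = {}")
    case True
    thus ?thesis by (simp add: DD_def der_empty cent_empty)
  next
    case False
    then obtain x where xS: "x \<in> S" by auto
    define m where "m = card S"
    have m1: "m \<ge> 1" using psubset.hyps xS by (simp add: m_def Suc_le_eq card_gt_0_iff) blast
    have "DD S \<le> m ^ 2 * fact (m - 1) * (\<Sum>i<m - 1. fact i)"
      unfolding m_def by (rule DD_rec[OF psubset.hyps xS]) (use psubset.IH psubset.hyps in auto)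
    also have "\<dots> \<le> m ^ 2 * fact (m - 1) * fact (m - 1)"
      by (intro mult_le_mono2 sum_fact_le)
    also have "\<dots> = (m * fact (m - 1)) ^ 2" by (simp add: power2_eq_square)
    also have "m * fact (m - 1) = (fact m :: nat)" using m1 by (metis fact_nonzero fact_num_eq_if of_nat_id not_one_le_zero)
    finally show ?thesis by (simp add: m_def)
  qed
qed

lemma DD_decay:
  assumes fin: "finite S" and m2: "card S \<ge> 2"
  shows "(card S - 1) * DD S \<le> 2 * fact (card S) ^ 2"
proof -
  define m where "m = card S"
  obtain x where xS: "x \<in> S" using m2 by (metis card.empty ex_in_conv not_numeral_le_zero)
  have "DD S \<le> m ^ 2 * fact (m - 1) * (\<Sum>i<m - 1. fact i)"
    unfolding m_def by (rule DD_rec[OF fin xS]) (use DD_le fin in \<open>auto intro: finite_subset\<close>)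
  also have "\<dots> \<le> m ^ 2 * fact (m - 1) * (2 * fact (m - 2))"
  proof -
    have "m - 1 - 1 = m - 2" by simp
    thus ?thesis using sum_fact_le2[of "m - 1"] m2 by (intro mult_le_mono2) (simp add: m_def)
  qed
  finally have "(m - 1) * DD S \<le> (m - 1) * (m ^ 2 * fact (m - 1) * (2 * fact (m - 2)))" by simp
  also have "\<dots> = 2 * (m * fact (m - 1)) * (m * ((m - 1) * fact (m - 2)))"
    by (simp add: power2_eq_square algebra_simps)
  also have "(m - 1) * fact (m - 2) = (fact (m - 1) :: nat)"
  proof -
    obtain j where "m = Suc (Suc j)" using m2 unfolding m_def by (metis add_2_eq_Suc le_Suc_ex)
    thus ?thesis by simp
  qed
  also have "m * fact (m - 1) = (fact m :: nat)"
  proof -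
    obtain j where "m = Suc (Suc j)" using m2 unfolding m_def by (metis add_2_eq_Suc le_Suc_ex)
    thus ?thesis by simp
  qed
  finally show ?thesis by (simp add: m_def power2_eq_square)
qed

lemma DD_one: "card S = 1 \<Longrightarrow> DD S = 0"
proof -
  assume c: "card S = 1"
  then obtain x where "S = {x}" by (auto simp: card_Suc_eq)
  hence "der S = {}" by (auto simp: der_def permutes_sing)
  thus "DD S = 0" by (simp add: DD_def)
qed

lemma restrict_permutes:
  assumes sp: "s permutes U" and inv: "\<And>y. s y \<in> S \<longleftrightarrow> y \<in> S"
  shows "perm_restrict s S permutes S"
proof (rule bij_imp_permutes)
  have "inj_on s S" using permutes_inj[OF sp] by (rule inj_on_subset) simp
  hence i: "inj_on (perm_restrict s S) S" by (rule inj_on_cong[THEN iffD1, rotated]) (simp add: perm_restrict_simps)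
  have "perm_restrict s S ` S = S"
  proof
    show "perm_restrict s S ` S \<subseteq> S" using inv by (auto simp: perm_restrict_simps)
    show "S \<subseteq> perm_restrict s S ` S"
    proof
      fix y assume y: "y \<in> S"
      have "s (inv s y) = y" using permutes_inverses(1)[OF sp] by simp
      hence "inv s y \<in> S" using inv y by metis
      thus "y \<in> perm_restrict s S ` S" using \<open>s (inv s y) = y\<close>
        by (metis image_eqI perm_restrict_simps(1))
    qed
  qed
  thus "bij_betw (perm_restrict s S) S S" using i by (simp add: bij_betw_def)
  show "\<And>x. x \<notin> S \<Longrightarrow> perm_restrict s S x = x" by (simp add: perm_restrict_simps)
qed

lemma supp_permutes: "p permutes U \<Longrightarrow> p permutes {y. p y \<noteq> y}"
  unfolding permutes_def by blast

lemma cent_supp: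
  assumes pp: "p permutes U" and fin: "finite U"
  shows "card (cent U p) \<le> card (cent {y. p y \<noteq> y} p) * fact (card U - card {y. p y \<noteq> y})"
proof -
  define S where "S = {y. p y \<noteq> y}"
  have SU: "S \<subseteq> U" using pp by (auto simp: S_def permutes_def)
  define f where "f = (\<lambda>s. (perm_restrict s S, perm_restrict s (U - S)))"
  have pinj: "inj p" using permutes_inj[OF pp] .
  have invS: "s y \<in> S \<longleftrightarrow> y \<in> S" if "s \<in> cent U p" for s y
  proof -
    have sc: "s \<circ> p = p \<circ> s" and sp: "s permutes U" using that by (auto simp: cent_def)
    have "p (s y) = s (p y)" using sc by (metis comp_apply)
    moreover have "inj s" using permutes_inj[OF sp] .
    ultimately show ?thesis by (auto simp: S_def dest: injD)
  qed
  have "inj_on f (cent U p)"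
  proof (rule inj_onI)
    fix s1 s2 assume s1: "s1 \<in> cent U p" and s2: "s2 \<in> cent U p" and eq: "f s1 = f s2"
    have p1: "s1 permutes U" and p2: "s2 permutes U" using s1 s2 by (auto simp: cent_def)
    show "s1 = s2"
    proof
      fix y
      show "s1 y = s2 y"
      proof (cases "y \<in> S")
        case True
        have "perm_restrict s1 S y = perm_restrict s2 S y" using eq by (simp add: f_def)
        thus ?thesis using True by (simp add: perm_restrict_simps)
      next
        case False
        show ?thesis
        proof (cases "y \<in> U")
          case True
          have "perm_restrict s1 (U - S) y = perm_restrict s2 (U - S) y" using eq by (simp add: f_def)
          thus ?thesis using True \<open>y \<notin> S\<close> by (simp add: perm_restrict_simps)
        next
          case False
          thus ?thesis using permutes_not_in[OF p1] permutes_not_in[OF p2] by simp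
        qed
      qed
    qed
  qed
  moreover have "f ` cent U p \<subseteq> cent S p \<times> {q. q permutes (U - S)}"
  proof
    fix t assume "t \<in> f ` cent U p"
    then obtain s where s: "s \<in> cent U p" and t: "t = f s" by auto
    have sp: "s permutes U" and sc: "s \<circ> p = p \<circ> s" using s by (auto simp: cent_def)
    have a: "perm_restrict s S permutes S" by (rule restrict_permutes[OF sp invS[OF s]])
    have "s y \<in> U - S \<longleftrightarrow> y \<in> U - S" for y
      using invS[OF s, of y] permutes_in_image[OF sp, of y] by auto
    hence b: "perm_restrict s (U - S) permutes (U - S)" by (rule restrict_permutes[OF sp])
    have c: "perm_restrict s S \<circ> p = p \<circ> perm_restrict s S"
    proof
      fix y
      show "(perm_restrict s S \<circ> p) y = (p \<circ> perm_restrict s S) y"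
      proof (cases "y \<in> S")
        case True
        have "p y \<in> S" using True pinj by (auto simp: S_def dest: injD)
        thus ?thesis using True sc by (simp add: perm_restrict_simps) (metis comp_apply)
      next
        case False
        thus ?thesis by (simp add: perm_restrict_simps S_def)
      qed
    qed
    show "t \<in> cent S p \<times> {q. q permutes (U - S)}" using a b c t by (simp add: f_def cent_def)
  qed
  moreover have "finite (cent S p \<times> {q. q permutes (U - S)})"
    using fin SU by (intro finite_cartesian_product finite_cent finite_permutations) (auto intro: finite_subset)
  ultimately have "card (cent U p) \<le> card (cent S p \<times> {q. q permutes (U - S)})"
    by (rule card_inj_on_le)
  also have "\<dots> = card (cent S p) * fact (card U - card S)"
    using fin SU by (simp add: card_cartesian_product card_permutations card_Diff_subset finite_subset)
  finally show ?thesis by (simp add: S_def)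
qed

lemma T_bound1:
  "(\<Sum>p\<in>{p. p permutes {..<n}} - {id}. card (cent {..<n} p) ^ 2)
     \<le> (\<Sum>S\<in>Pow {..<n}. if S = {} then 0 else fact (n - card S) ^ 2 * DD S)"
proof -
  define P where "P = {p. p permutes {..<n}} - {id}"
  have finP: "finite P" unfolding P_def by (simp add: finite_permutations)
  have "(\<Sum>p\<in>P. card (cent {..<n} p) ^ 2)
      = (\<Sum>S\<in>Pow {..<n}. \<Sum>p\<in>{p\<in>P. {y. p y \<noteq> y} = S}. card (cent {..<n} p) ^ 2)"
    by (rule sum.group[symmetric, OF finP]) (auto simp: P_def permutes_def)
  also have "\<dots> \<le> (\<Sum>S\<in>Pow {..<n}. if S = {} then 0 else fact (n - card S) ^ 2 * DD S)"
  proof (rule sum_mono)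
    fix S assume S: "S \<in> Pow {..<n}"
    show "(\<Sum>p\<in>{p\<in>P. {y. p y \<noteq> y} = S}. card (cent {..<n} p) ^ 2)
        \<le> (if S = {} then 0 else fact (n - card S) ^ 2 * DD S)"
    proof (cases "S = {}")
      case True
      have "{p\<in>P. {y. p y \<noteq> y} = S} = {}" using True by (auto simp: P_def fun_eq_iff)
      thus ?thesis using True by (simp only:) simp
    next
      case False
      have "(\<Sum>p\<in>{p\<in>P. {y. p y \<noteq> y} = S}. card (cent {..<n} p) ^ 2)
          \<le> (\<Sum>p\<in>{p\<in>P. {y. p y \<noteq> y} = S}. fact (n - card S) ^ 2 * card (cent S p) ^ 2)"
      proof (rule sum_mono)
        fix p assume p: "p \<in> {p\<in>P. {y. p y \<noteq> y} = S}"
        have "card (cent {..<n} p) \<le> card (cent S p) * fact (n - card S)"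
          using cent_supp[of p "{..<n}"] p by (auto simp: P_def)
        hence "card (cent {..<n} p) ^ 2 \<le> (card (cent S p) * fact (n - card S)) ^ 2"
          by (rule power_mono) simp
        thus "card (cent {..<n} p) ^ 2 \<le> fact (n - card S) ^ 2 * card (cent S p) ^ 2"
          by (simp add: power_mult_distrib mult.commute)
      qed
      also have "\<dots> \<le> (\<Sum>p\<in>der S. fact (n - card S) ^ 2 * card (cent S p) ^ 2)"
      proof (rule sum_mono2)
        show "finite (der S)" using S by (intro finite_der) (auto intro: finite_subset)
        show "{p\<in>P. {y. p y \<noteq> y} = S} \<subseteq> der S"
          using supp_permutes by (auto simp: P_def der_def)
      qed simp
      also have "\<dots> = fact (n - card S) ^ 2 * DD S" by (simp add: DD_def sum_distrib_left)
      finally show ?thesis using False by simp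
    qed
  qed
  finally show ?thesis by (simp add: P_def)
qed



lemma binom_big:
  fixes n m :: nat
  assumes m2: "2 \<le> m" and mn: "m < n"
  shows "n * (n - 1) \<le> 2 * ((m - 1) * (n choose m))"
proof (cases "m = n - 1")
  case True
  have "n choose m = n" using True mn binomial_symmetric[of 1 n] by simp
  have "n - 1 \<le> 2 * (m - 1)" using True m2 by linarith
  hence "n * (n - 1) \<le> n * (2 * (m - 1))" by (rule mult_le_mono2)
  thus ?thesis using \<open>n choose m = n\<close> by (simp add: algebra_simps)
next
  case False
  hence m2': "m \<le> n - 2" using mn by simp
  have "n choose 2 \<le> n choose m"
  proof (cases "2 * m \<le> n")
    case True thus ?thesis using m2 by (intro binomial_mono) auto
  next
    case False
    have "n choose 2 \<le> n choose (n - m)" using False m2' by (intro binomial_mono) auto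
    also have "\<dots> = n choose m" using mn by (intro binomial_symmetric[symmetric]) simp
    finally show ?thesis .
  qed
  moreover have "n * (n - 1) = 2 * (n choose 2)"
  proof -
    have "even (n * (n - 1))" by (cases "even n") auto
    thus ?thesis by (simp add: choose_two)
  qed
  ultimately have "n * (n - 1) \<le> 2 * (n choose m)" by simp
  also have "\<dots> \<le> 2 * ((m - 1) * (n choose m))"
  proof -
    have "1 \<le> m - 1" using m2 by linarith
    thus ?thesis using mult_le_mono1[OF \<open>1 \<le> m - 1\<close>, of "n choose m"] by simp
  qed
  finally show ?thesis .
qed

lemma sum_eps:
  assumes n2: "n \<ge> 2"
  shows "(\<Sum>m\<le>n. (if m < 2 then 0 else 2 / (real (m - 1) * real (n choose m)))) \<le> 10 / real (n - 1)"
proof -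
  define a where "a = 4 / (real n * real (n - 1))"
  have n1: "real (n - 1) > 0" using n2 by simp
  have a0: "a \<ge> 0" by (simp add: a_def)
  have "(\<Sum>m\<le>n. (if m < 2 then 0 else 2 / (real (m - 1) * real (n choose m))))
      \<le> (\<Sum>m\<le>n. a + (if m = n then 2 / real (n - 1) else 0))"
  proof (rule sum_mono)
    fix m assume m: "m \<in> {..n}"
    show "(if m < 2 then 0 else 2 / (real (m - 1) * real (n choose m))) \<le> a + (if m = n then 2 / real (n - 1) else 0)"
    proof (cases "m < 2")
      case True thus ?thesis using a0 n1 by simp
    next
      case False
      show ?thesis
      proof (cases "m = n")
        case True thus ?thesis using False a0 by simp
      next
        case mn: False
        have "real (n * (n - 1)) \<le> real (2 * ((m - 1) * (n choose m)))"
          using binom_big[of m n] False mn m by (simp only: of_nat_le_iff) auto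
        hence le: "real n * real (n - 1) \<le> 2 * (real (m - 1) * real (n choose m))" by simp
        have pos: "real n * real (n - 1) > 0" using n2 by simp
        have X: "real (m - 1) * real (n choose m) > 0" using False mn m by simp
        have "2 / (real (m - 1) * real (n choose m)) = 4 / (2 * (real (m - 1) * real (n choose m)))"
          by simp
        also have "\<dots> \<le> 4 / (real n * real (n - 1))"
          by (rule divide_left_mono[OF le]) (use X pos in \<open>simp_all only: zero_less_mult_iff\<close>, auto)
        finally have "2 / (real (m - 1) * real (n choose m)) \<le> 4 / (real n * real (n - 1))" .
        thus ?thesis using False mn by (simp add: a_def)
      qed
    qed
  qed
  also have "\<dots> = real (n + 1) * a + 2 / real (n - 1)" by (simp add: sum.distrib)
  also have "real (n + 1) * a \<le> 8 / real (n - 1)"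
  proof -
    have "real (n + 1) * a = 4 * (real (n + 1) / real n) / real (n - 1)" by (simp add: a_def field_simps)
    also have "real (n + 1) / real n \<le> 2" using n2 by (simp add: field_simps)
    hence "4 * (real (n + 1) / real n) / real (n - 1) \<le> 4 * 2 / real (n - 1)"
      using n1 by (intro divide_right_mono mult_left_mono) auto
    finally show ?thesis by simp
  qed
  finally show ?thesis by (simp add: add_divide_distrib[symmetric])
qed

lemma T_real:
  assumes n2: "n \<ge> 2"
  shows "real (\<Sum>p\<in>{p. p permutes {..<n}} - {id}. card (cent {..<n} p) ^ 2) \<le> 10 * fact n ^ 2 / real (n - 1)"
proof -
  define U where "U = {..<n::nat}"
  define w where "w = (\<lambda>m. if m < 2 then 0 else 2 * fact (n - m) ^ 2 * fact m ^ 2 / real (m - 1) :: real)"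
  have "real (\<Sum>p\<in>{p. p permutes {..<n}} - {id}. card (cent {..<n} p) ^ 2)
      \<le> real (\<Sum>S\<in>Pow U. if S = {} then 0 else fact (n - card S) ^ 2 * DD S)"
    unfolding U_def by (rule of_nat_mono[OF T_bound1])
  also have "\<dots> \<le> (\<Sum>S\<in>Pow U. w (card S))"
    unfolding of_nat_sum
  proof (rule sum_mono)
    fix S assume S: "S \<in> Pow U"
    have finS: "finite S" using S by (auto simp: U_def intro: finite_subset)
    show "real (if S = {} then 0 else fact (n - card S) ^ 2 * DD S) \<le> w (card S)"
    proof (cases "card S < 2")
      case True
      hence "S = {} \<or> card S = 1" using finS by (metis One_nat_def card_0_eq less_2_cases)
      thus ?thesis using True DD_one by (auto simp: w_def)
    next
      case False
      hence ne: "S \<noteq> {}" by auto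
      have d: "real (card S - 1) * real (DD S) \<le> 2 * fact (card S) ^ 2"
        using DD_decay[OF finS] False by (metis (mono_tags, lifting) not_less of_nat_fact of_nat_le_iff of_nat_mult of_nat_numeral of_nat_power)
      have p: "real (card S - 1) > 0" using False by simp
      have "real (DD S) \<le> 2 * fact (card S) ^ 2 / real (card S - 1)"
        using d p by (simp add: field_simps)
      hence "fact (n - card S) ^ 2 * real (DD S) \<le> fact (n - card S) ^ 2 * (2 * fact (card S) ^ 2 / real (card S - 1))"
        by (rule mult_left_mono) simp
      thus ?thesis using ne False by (simp add: w_def ac_simps)
    qed
  qed
  also have "\<dots> = (\<Sum>m\<le>n. \<Sum>S\<in>{S\<in>Pow U. card S = m}. w (card S))"
    by (rule sum.group[symmetric]) (auto simp: U_def card_mono[of "{..<n}", simplified])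
  also have "\<dots> = (\<Sum>m\<le>n. real (n choose m) * w m)"
  proof (rule sum.cong[OF refl])
    fix m
    have "{S\<in>Pow U. card S = m} = {B. B \<subseteq> U \<and> card B = m}" by auto
    hence "card {S\<in>Pow U. card S = m} = n choose m" by (simp add: n_subsets U_def)
    thus "(\<Sum>S\<in>{S\<in>Pow U. card S = m}. w (card S)) = real (n choose m) * w m" by simp
  qed
  also have "\<dots> = (\<Sum>m\<le>n. fact n ^ 2 * (if m < 2 then 0 else 2 / (real (m - 1) * real (n choose m))))"
  proof (rule sum.cong[OF refl])
    fix m assume m: "m \<in> {..n}"
    have f: "fact m * fact (n - m) * real (n choose m) = fact n"
      using binomial_fact_lemma[of m n] m by (metis atMost_iff of_nat_fact of_nat_mult)
    have c: "real (n choose m) > 0" using m by simp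
    show "real (n choose m) * w m = fact n ^ 2 * (if m < 2 then 0 else 2 / (real (m - 1) * real (n choose m)))"
      using c unfolding w_def f[symmetric] by (simp add: field_simps power2_eq_square)
  qed
  also have "\<dots> = fact n ^ 2 * (\<Sum>m\<le>n. (if m < 2 then 0 else 2 / (real (m - 1) * real (n choose m))))"
    by (simp add: sum_distrib_left)
  also have "\<dots> \<le> fact n ^ 2 * (10 / real (n - 1))"
    by (rule mult_left_mono[OF sum_eps[OF n2]]) simp
  finally show ?thesis by (simp add: mult.commute)
qed



definition Mat :: "nat \<Rightarrow> (nat \<Rightarrow> nat) \<Rightarrow> nat set \<Rightarrow> nat \<Rightarrow> nat \<Rightarrow> int" where
  "Mat n s E = (\<lambda>i j. if i < n \<and> j < n \<and> i = s j then (if j \<in> E then -1 else 1) else 0)"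

lemma Mat_in_Bn:
  assumes sp: "s permutes {..<n}"
  shows "Mat n s E \<in> Bn n"
proof -
  have a: "\<exists>!j. j < n \<and> Mat n s E i j \<noteq> 0" if i: "i < n" for i
  proof
    have "s (inv s i) = i" using permutes_inverses(1)[OF sp] by simp
    moreover have "inv s i < n" using permutes_in_image[OF permutes_inv[OF sp]] i by simp
    ultimately show "inv s i < n \<and> Mat n s E i (inv s i) \<noteq> 0" using i by (simp add: Mat_def)
  next
    fix j assume "j < n \<and> Mat n s E i j \<noteq> 0"
    hence "i = s j" by (simp add: Mat_def split: if_splits)
    thus "j = inv s i" using permutes_inverses(2)[OF sp] by simp
  qed
  have b: "\<exists>!i. i < n \<and> Mat n s E i j \<noteq> 0" if j: "j < n" for j
  proof
    show "s j < n \<and> Mat n s E (s j) j \<noteq> 0" using j permutes_in_image[OF sp] by (simp add: Mat_def)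
  next
    fix i assume "i < n \<and> Mat n s E i j \<noteq> 0"
    thus "i = s j" by (simp add: Mat_def split: if_splits)
  qed
  show ?thesis unfolding Bn_def using a b by (auto simp: Mat_def)
qed

lemma Bn_Mat:
  assumes A: "A \<in> Bn n"
  shows "\<exists>s E. s permutes {..<n} \<and> E \<subseteq> {..<n} \<and> A = Mat n s E"
proof -
  have z: "\<And>i j. n \<le> i \<or> n \<le> j \<Longrightarrow> A i j = 0" and v: "\<And>i j. A i j \<in> {-1, 0, 1}"
    and r: "\<And>i. i < n \<Longrightarrow> \<exists>!j. j < n \<and> A i j \<noteq> 0"
    and c: "\<And>j. j < n \<Longrightarrow> \<exists>!i. i < n \<and> A i j \<noteq> 0"
    using A unfolding Bn_def by blast+
  define s where "s = (\<lambda>j. if j < n then (THE i. i < n \<and> A i j \<noteq> 0) else j)"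
  have s1: "s j < n \<and> A (s j) j \<noteq> 0" if "j < n" for j
    using theI'[OF c[OF that]] that by (simp add: s_def)
  have s2: "i = s j" if "j < n" "i < n" "A i j \<noteq> 0" for i j
    using the1_equality[OF c[OF that(1)]] that by (simp add: s_def)
  have inj: "inj_on s {..<n}"
  proof (rule inj_onI)
    fix j1 j2 assume j1: "j1 \<in> {..<n}" and j2: "j2 \<in> {..<n}" and e: "s j1 = s j2"
    have "A (s j1) j1 \<noteq> 0" "s j1 < n" using s1[of j1] j1 by auto
    moreover have "A (s j1) j2 \<noteq> 0" using s1[of j2] j2 e by simp
    ultimately show "j1 = j2" using r[OF \<open>s j1 < n\<close>] j1 j2 by auto
  qed
  have img: "s ` {..<n} \<subseteq> {..<n}" using s1 by auto
  have "s ` {..<n} = {..<n}" by (rule endo_inj_surj[OF _ img inj]) simp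
  hence "bij_betw s {..<n} {..<n}" using inj by (simp add: bij_betw_def)
  hence sp: "s permutes {..<n}" by (rule bij_imp_permutes) (simp add: s_def)
  define E where "E = {j. j < n \<and> A (s j) j = -1}"
  have "A = Mat n s E"
  proof (intro ext)
    fix i j
    show "A i j = Mat n s E i j"
    proof (cases "i < n \<and> j < n")
      case False thus ?thesis using z by (auto simp: Mat_def)
    next
      case True
      show ?thesis
      proof (cases "i = s j")
        case True
        thus ?thesis using v[of i j] s1[of j] \<open>i < n \<and> j < n\<close> by (auto simp: Mat_def E_def)
      next
        case False
        thus ?thesis using s2[of j i] \<open>i < n \<and> j < n\<close> by (auto simp: Mat_def)
      qed
    qed
  qed
  moreover have "E \<subseteq> {..<n}" by (auto simp: E_def)
  ultimately show ?thesis using sp by blast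
qed

lemma Mat_inj:
  "inj_on (\<lambda>(s, E). Mat n s E) ({s. s permutes {..<n}} \<times> Pow {..<n})"
proof (rule inj_onI, clarify)
  fix s1 E1 s2 E2
  assume p1: "s1 permutes {..<n}" and p2: "s2 permutes {..<n}" and e1: "E1 \<subseteq> {..<n}" and e2: "E2 \<subseteq> {..<n}"
    and eq: "Mat n s1 E1 = Mat n s2 E2"
  have ss: "s1 j = s2 j" for j
  proof (cases "j < n")
    case True
    have "Mat n s1 E1 (s1 j) j \<noteq> 0" using True permutes_in_image[OF p1] by (simp add: Mat_def)
    hence "Mat n s2 E2 (s1 j) j \<noteq> 0" using eq by simp
    thus ?thesis by (simp add: Mat_def split: if_splits)
  next
    case False thus ?thesis using permutes_not_in[OF p1] permutes_not_in[OF p2] by simp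
  qed
  hence s: "s1 = s2" by auto
  have "j \<in> E1 \<longleftrightarrow> j \<in> E2" for j
  proof (cases "j < n")
    case True
    have "Mat n s1 E1 (s1 j) j = Mat n s2 E2 (s1 j) j" using eq by simp
    thus ?thesis using True permutes_in_image[OF p1] s by (simp add: Mat_def split: if_splits)
  next
    case False thus ?thesis using e1 e2 by auto
  qed
  thus "s1 = s2 \<and> E1 = E2" using s by auto
qed

lemma Mat_neg:
  assumes sp: "s permutes {..<n}" and E: "E \<subseteq> {..<n}"
  shows "card {(i, j). i < n \<and> j < n \<and> Mat n s E i j = -1} = card E"
proof -
  have "{(i, j). i < n \<and> j < n \<and> Mat n s E i j = -1} = (\<lambda>j. (s j, j)) ` E"
    using E permutes_in_image[OF sp] by (auto simp: Mat_def split: if_splits)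
  moreover have "inj_on (\<lambda>j. (s j, j)) E" by (auto intro: inj_onI)
  ultimately show ?thesis by (simp add: card_image)
qed

lemma Bn_eq: "Bn n = (\<lambda>(s, E). Mat n s E) ` ({s. s permutes {..<n}} \<times> Pow {..<n})"
  using Bn_Mat Mat_in_Bn by fastforce

lemma Xnk_eq: "Xnk n k = (\<lambda>(s, E). Mat n s E) ` ({s. s permutes {..<n}} \<times> {E. E \<subseteq> {..<n} \<and> card E = k})"
proof
  show "Xnk n k \<subseteq> (\<lambda>(s, E). Mat n s E) ` ({s. s permutes {..<n}} \<times> {E. E \<subseteq> {..<n} \<and> card E = k})"
  proof
    fix A assume "A \<in> Xnk n k"
    hence A: "A \<in> Bn n" and c: "card {(i, j). i < n \<and> j < n \<and> A i j = -1} = k" by (auto simp: Xnk_def)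
    obtain s E where "s permutes {..<n}" "E \<subseteq> {..<n}" "A = Mat n s E" using Bn_Mat[OF A] by blast
    thus "A \<in> (\<lambda>(s, E). Mat n s E) ` ({s. s permutes {..<n}} \<times> {E. E \<subseteq> {..<n} \<and> card E = k})"
      using c Mat_neg by force
  qed
  show "(\<lambda>(s, E). Mat n s E) ` ({s. s permutes {..<n}} \<times> {E. E \<subseteq> {..<n} \<and> card E = k}) \<subseteq> Xnk n k"
    using Mat_in_Bn Mat_neg by (auto simp: Xnk_def)
qed

lemma card_Bn: "card (Bn n) = fact n * 2 ^ n"
proof -
  have "card (Bn n) = card ({s. s permutes {..<n}} \<times> Pow {..<n})"
    unfolding Bn_eq by (rule card_image[OF Mat_inj])
  thus ?thesis by (simp add: card_cartesian_product card_permutations card_Pow)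
qed

lemma card_Xnk: "card (Xnk n k) = fact n * (n choose k)"
proof -
  have "card (Xnk n k) = card ({s. s permutes {..<n}} \<times> {E. E \<subseteq> {..<n} \<and> card E = k})"
    unfolding Xnk_eq by (rule card_image[OF inj_on_subset[OF Mat_inj]]) auto
  thus ?thesis by (simp add: card_cartesian_product card_permutations n_subsets)
qed



lemma conj_formula:
  assumes pp: "p permutes {..<n}" and z: "\<And>i j. n \<le> i \<or> n \<le> j \<Longrightarrow> A i j = 0"
  shows "conj_act n p A = (\<lambda>i j. if i < n \<and> j < n then A (inv p i) (inv p j) else 0)"
proof (intro ext)
  fix i j
  have ip: "inv p permutes {..<n}" using permutes_inv[OF pp] .
  have m1: "mat_mult n (perm_mat n p) A i j' = (if i < n then A (inv p i) j' else 0)" for j'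
  proof (cases "i < n")
    case True
    have "mat_mult n (perm_mat n p) A i j' = (\<Sum>l<n. if l = inv p i then A l j' else 0)"
      unfolding mat_mult_def perm_mat_def
    proof (rule sum.cong[OF refl])
      fix l assume "l \<in> {..<n}"
      have "i = p l \<longleftrightarrow> l = inv p i"
        using permutes_inverses[OF pp] by metis
      thus "(if i < n \<and> l < n \<and> i = p l then 1 else 0) * A l j' = (if l = inv p i then A l j' else 0)"
        using True \<open>l \<in> {..<n}\<close> by auto
    qed
    also have "\<dots> = A (inv p i) j'"
      using permutes_in_image[OF ip] True by (simp add: sum.delta)
    finally show ?thesis using True by simp
  next
    case False thus ?thesis by (simp add: mat_mult_def perm_mat_def)
  qed
  have "conj_act n p A i j = (\<Sum>l<n. mat_mult n (perm_mat n p) A i l * perm_mat n (inv p) l j)"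
    by (simp add: conj_act_def mat_mult_def)
  also have "\<dots> = (\<Sum>l<n. if l = inv p j \<and> j < n then mat_mult n (perm_mat n p) A i l else 0)"
    by (rule sum.cong[OF refl]) (auto simp: perm_mat_def)
  also have "\<dots> = (if j < n then mat_mult n (perm_mat n p) A i (inv p j) else 0)"
  proof (cases "j < n")
    case True thus ?thesis using permutes_in_image[OF ip] by (simp add: sum.delta)
  next
    case False thus ?thesis by simp
  qed
  also have "\<dots> = (if i < n \<and> j < n then A (inv p i) (inv p j) else 0)"
    using m1 by simp
  finally show "conj_act n p A i j = (if i < n \<and> j < n then A (inv p i) (inv p j) else 0)" .
qed

lemma conj_id:
  assumes "A \<in> Bn n"
  shows "conj_act n id A = A"
proof -
  have z: "\<And>i j. n \<le> i \<or> n \<le> j \<Longrightarrow> A i j = 0" using assms unfolding Bn_def by blast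
  show ?thesis
  proof (intro ext)
    fix i j
    have "conj_act n id A i j = (if i < n \<and> j < n then A i j else 0)"
      using conj_formula[OF permutes_id z] by simp
    thus "conj_act n id A i j = A i j" using z[of i j] by (cases "i < n \<and> j < n") auto
  qed
qed

lemma conj_fixed_comm:
  assumes pp: "p permutes {..<n}" and sp: "s permutes {..<n}"
    and fx: "conj_act n p (Mat n s E) = Mat n s E"
  shows "s \<circ> p = p \<circ> s"
proof
  fix b
  have z: "\<And>i j. n \<le> i \<or> n \<le> j \<Longrightarrow> Mat n s E i j = 0" by (auto simp: Mat_def)
  show "(s \<circ> p) b = (p \<circ> s) b"
  proof (cases "b < n")
    case True
    have sb: "s b < n" using permutes_in_image[OF sp] True by simp
    have "p (s b) < n" "p b < n" using permutes_in_image[OF pp] sb True by auto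
    have "Mat n s E (s b) b \<noteq> 0" using True sb by (simp add: Mat_def)
    moreover have "conj_act n p (Mat n s E) (p (s b)) (p b) = Mat n s E (s b) b"
      using conj_formula[OF pp z] \<open>p (s b) < n\<close> \<open>p b < n\<close> permutes_inverses(2)[OF pp] by simp
    ultimately have "Mat n s E (p (s b)) (p b) \<noteq> 0" using fx by simp
    thus ?thesis by (simp add: Mat_def split: if_splits)
  next
    case False thus ?thesis using permutes_not_in[OF pp] permutes_not_in[OF sp] by simp
  qed
qed

lemma perm_char_id:
  assumes "Y \<subseteq> Bn n"
  shows "perm_char n Y id = real (card Y)"
proof -
  have "{A\<in>Y. conj_act n id A = A} = Y" using assms conj_id by blast
  thus ?thesis by (simp add: perm_char_def)
qed

lemma perm_char_le:
  assumes pp: "p permutes {..<n}" and Es: "Es \<subseteq> Pow {..<n}" and finEs: "finite Es"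
  shows "perm_char n ((\<lambda>(s, E). Mat n s E) ` ({s. s permutes {..<n}} \<times> Es)) p
       \<le> real (card (cent {..<n} p) * card Es)"
proof -
  have "{A \<in> (\<lambda>(s, E). Mat n s E) ` ({s. s permutes {..<n}} \<times> Es). conj_act n p A = A}
      \<subseteq> (\<lambda>(s, E). Mat n s E) ` (cent {..<n} p \<times> Es)"
  proof
    fix A assume "A \<in> {A \<in> (\<lambda>(s, E). Mat n s E) ` ({s. s permutes {..<n}} \<times> Es). conj_act n p A = A}"
    then obtain s E where s: "s permutes {..<n}" and E: "E \<in> Es" and A: "A = Mat n s E"
      and fx: "conj_act n p (Mat n s E) = Mat n s E" by auto
    have "s \<in> cent {..<n} p" using conj_fixed_comm[OF pp s fx] s by (simp add: cent_def)
    thus "A \<in> (\<lambda>(s, E). Mat n s E) ` (cent {..<n} p \<times> Es)" using A E by blast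
  qed
  hence "card {A \<in> (\<lambda>(s, E). Mat n s E) ` ({s. s permutes {..<n}} \<times> Es). conj_act n p A = A}
      \<le> card ((\<lambda>(s, E). Mat n s E) ` (cent {..<n} p \<times> Es))"
    using finEs by (intro card_mono finite_imageI finite_cartesian_product finite_cent) auto
  also have "\<dots> \<le> card (cent {..<n} p \<times> Es)" by (rule card_image_le) (use finEs in \<open>auto intro: finite_cent\<close>)
  also have "\<dots> = card (cent {..<n} p) * card Es" by (simp add: card_cartesian_product)
  finally show ?thesis unfolding perm_char_def by (simp only: of_nat_le_iff)
qed



lemma per_n:
  assumes n2: "n \<ge> 2" and Yeq: "Y = (\<lambda>(s, E). Mat n s E) ` ({s. s permutes {..<n}} \<times> Es)"
    and Es: "Es \<subseteq> Pow {..<n}" and c: "c = real (card Es)" and cpos: "c > 0"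
    and cardY: "card Y = fact n * card Es"
  defines "e \<equiv> (\<Sum>p\<in>{p. p permutes {..<n}} - {id}. perm_char n Y p ^ 2) / (c ^ 2 * fact n ^ 2)"
  shows "0 \<le> e" "e \<le> 10 / real (n - 1)"
    "char_norm n (\<lambda>p. c * reg_char n p) / char_norm n (perm_char n Y) = 1 / sqrt (1 + e)"
    "char_inner n (reg_char n) (perm_char n Y) / (char_norm n (reg_char n) * char_norm n (perm_char n Y)) = 1 / sqrt (1 + e)"
proof -
  define P where "P = {p. p permutes {..<n}}"
  define a :: real where "a = fact n"
  define R where "R = (\<Sum>p\<in>P - {id}. perm_char n Y p ^ 2)"
  have finP: "finite P" unfolding P_def by (simp add: finite_permutations)
  have idP: "id \<in> P" by (simp add: P_def)
  have finEs: "finite Es" using Es by (rule finite_subset) simp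
  have apos: "a > 0" by (simp add: a_def)
  have YB: "Y \<subseteq> Bn n" using Yeq Mat_in_Bn by auto
  have chid: "perm_char n Y id = a * c" using perm_char_id[OF YB] cardY by (simp add: a_def c)
  have R0: "R \<ge> 0" unfolding R_def by (intro sum_nonneg) simp
  have "R \<le> (\<Sum>p\<in>P - {id}. c ^ 2 * real (card (cent {..<n} p) ^ 2))"
    unfolding R_def
  proof (rule sum_mono)
    fix p assume "p \<in> P - {id}"
    hence pp: "p permutes {..<n}" by (simp add: P_def)
    have "perm_char n Y p \<le> real (card (cent {..<n} p) * card Es)"
      unfolding Yeq by (rule perm_char_le[OF pp Es finEs])
    moreover have "perm_char n Y p \<ge> 0" by (simp add: perm_char_def)
    ultimately have "perm_char n Y p ^ 2 \<le> real (card (cent {..<n} p) * card Es) ^ 2"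
      by (intro power_mono) auto
    thus "perm_char n Y p ^ 2 \<le> c ^ 2 * real (card (cent {..<n} p) ^ 2)"
      by (simp add: c power_mult_distrib mult.commute)
  qed
  also have "\<dots> = c ^ 2 * real (\<Sum>p\<in>P - {id}. card (cent {..<n} p) ^ 2)"
    by (simp add: sum_distrib_left)
  also have "\<dots> \<le> c ^ 2 * (10 * a ^ 2 / real (n - 1))"
    using T_real[OF n2] unfolding P_def a_def by (intro mult_left_mono) auto
  finally have Rle: "R \<le> c ^ 2 * (10 * a ^ 2 / real (n - 1))" .
  have eR: "e = R / (c ^ 2 * a ^ 2)" by (simp add: e_def R_def P_def a_def)
  have ca: "c ^ 2 * a ^ 2 > 0" using cpos apos by simp
  show "0 \<le> e" using R0 ca eR by simp
  show "e \<le> 10 / real (n - 1)"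
  proof -
    have "e \<le> c ^ 2 * (10 * a ^ 2 / real (n - 1)) / (c ^ 2 * a ^ 2)"
      unfolding eR by (rule divide_right_mono[OF Rle]) (use ca in simp)
    also have "\<dots> = 10 / real (n - 1)" using cpos apos by (simp add: field_simps)
    finally show ?thesis .
  qed
  have sumsq: "(\<Sum>p\<in>P. perm_char n Y p * perm_char n Y p) = (a * c) ^ 2 * (1 + e)"
  proof -
    have "(\<Sum>p\<in>P. perm_char n Y p * perm_char n Y p) = perm_char n Y id * perm_char n Y id + R"
      unfolding R_def by (subst sum.remove[OF finP idP]) (simp add: power2_eq_square)
    also have "\<dots> = (a * c) ^ 2 * (1 + e)" using chid eR cpos apos by (simp add: field_simps power2_eq_square)
    finally show ?thesis .
  qed
  have inYY: "char_inner n (perm_char n Y) (perm_char n Y) = (a * c) ^ 2 * (1 + e) / a"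
    unfolding char_inner_def using sumsq by (simp add: P_def a_def)
  have rr: "(\<Sum>p\<in>P. f p * reg_char n p) = f id * a" for f
  proof -
    have "(\<Sum>p\<in>P. f p * reg_char n p) = (\<Sum>p\<in>P. if p = id then f id * a else 0)"
      by (rule sum.cong[OF refl]) (simp add: reg_char_def a_def)
    also have "\<dots> = f id * a" using finP idP by (simp add: sum.delta)
    finally show ?thesis .
  qed
  have inCC: "char_inner n (\<lambda>p. c * reg_char n p) (\<lambda>p. c * reg_char n p) = c ^ 2 * a"
  proof -
    have "(\<Sum>p\<in>P. c * reg_char n p * (c * reg_char n p)) = (\<Sum>p\<in>P. (c * c * reg_char n p) * reg_char n p)"
      by (simp add: ac_simps)
    also have "\<dots> = c * c * reg_char n id * a" by (rule rr)
    finally show ?thesis unfolding char_inner_def using apos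
      by (simp add: P_def a_def reg_char_def power2_eq_square)
  qed
  have inRR: "char_inner n (reg_char n) (reg_char n) = a"
  proof -
    have "(\<Sum>p\<in>P. reg_char n p * reg_char n p) = reg_char n id * a" by (rule rr)
    thus ?thesis unfolding char_inner_def using apos by (simp add: P_def a_def reg_char_def)
  qed
  have inRY: "char_inner n (reg_char n) (perm_char n Y) = a * c"
  proof -
    have "(\<Sum>p\<in>P. reg_char n p * perm_char n Y p) = (\<Sum>p\<in>P. perm_char n Y p * reg_char n p)"
      by (simp add: ac_simps)
    also have "\<dots> = perm_char n Y id * a" by (rule rr)
    finally show ?thesis unfolding char_inner_def using apos chid by (simp add: P_def a_def)
  qed
  have e1: "1 + e > 0" using \<open>0 \<le> e\<close> by simp
  show "char_norm n (\<lambda>p. c * reg_char n p) / char_norm n (perm_char n Y) = 1 / sqrt (1 + e)"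
  proof -
    have "char_norm n (\<lambda>p. c * reg_char n p) = sqrt (c ^ 2 * a)" by (simp add: char_norm_def inCC)
    moreover have "char_norm n (perm_char n Y) = sqrt (c ^ 2 * a) * sqrt (1 + e)"
      unfolding char_norm_def inYY using apos by (simp add: real_sqrt_mult[symmetric] power_mult_distrib power2_eq_square)
    moreover have "sqrt (c ^ 2 * a) > 0" using apos cpos by simp
    ultimately show ?thesis using apos cpos by simp
  qed
  show "char_inner n (reg_char n) (perm_char n Y) / (char_norm n (reg_char n) * char_norm n (perm_char n Y)) = 1 / sqrt (1 + e)"
  proof -
    have "char_norm n (reg_char n) * char_norm n (perm_char n Y) = sqrt ((a * c) ^ 2 * (1 + e))"
      unfolding char_norm_def inYY inRR using apos
      by (simp add: real_sqrt_mult[symmetric] power2_eq_square)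
    also have "\<dots> = a * c * sqrt (1 + e)" using apos cpos by (simp add: real_sqrt_mult)
    finally have "char_norm n (reg_char n) * char_norm n (perm_char n Y) = a * c * sqrt (1 + e)" .
    thus ?thesis using inRY apos cpos by simp
  qed
qed

lemma limit_general:
  fixes Y :: "nat \<Rightarrow> (nat \<Rightarrow> nat \<Rightarrow> int) set" and Es :: "nat \<Rightarrow> nat set set" and c :: "nat \<Rightarrow> real"
  assumes Yeq: "\<And>n. Y n = (\<lambda>(s, E). Mat n s E) ` ({s. s permutes {..<n}} \<times> Es n)"
    and Es: "\<And>n. Es n \<subseteq> Pow {..<n}" and c: "\<And>n. c n = real (card (Es n))"
    and cpos: "\<And>n. n \<ge> 2 \<Longrightarrow> c n > 0" and cardY: "\<And>n. card (Y n) = fact n * card (Es n)"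
  shows "(\<lambda>n. char_norm n (\<lambda>p. c n * reg_char n p) / char_norm n (perm_char n (Y n))) \<longlonglongrightarrow> 1"
    and "(\<lambda>n. char_inner n (reg_char n) (perm_char n (Y n))
               / (char_norm n (reg_char n) * char_norm n (perm_char n (Y n)))) \<longlonglongrightarrow> 1"
proof -
  define e where "e n = (\<Sum>p\<in>{p. p permutes {..<n}} - {id}. perm_char n (Y n) p ^ 2) / (c n ^ 2 * fact n ^ 2)" for n
  have pn: "0 \<le> e n" "e n \<le> 10 / real (n - 1)"
    "char_norm n (\<lambda>p. c n * reg_char n p) / char_norm n (perm_char n (Y n)) = 1 / sqrt (1 + e n)"
    "char_inner n (reg_char n) (perm_char n (Y n)) / (char_norm n (reg_char n) * char_norm n (perm_char n (Y n))) = 1 / sqrt (1 + e n)"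
    if n2: "n \<ge> 2" for n
    using per_n[OF n2 Yeq Es c cpos[OF n2] cardY] unfolding e_def by auto
  have e0: "e \<longlonglongrightarrow> 0"
  proof (rule tendsto_sandwich[of "\<lambda>_. 0" e sequentially "\<lambda>n. 20 / real n"])
    show "\<forall>\<^sub>F n in sequentially. 0 \<le> e n"
      using eventually_ge_at_top[of 2] by eventually_elim (use pn in auto)
    show "\<forall>\<^sub>F n in sequentially. e n \<le> 20 / real n"
      using eventually_ge_at_top[of 2]
    proof eventually_elim
      case (elim n)
      have "e n \<le> 10 / real (n - 1)" using pn elim by auto
      also have "\<dots> \<le> 20 / real n" using elim by (simp add: field_simps of_nat_diff)
      finally show ?case .
    qed
    show "(\<lambda>n. 20 / real n) \<longlonglongrightarrow> 0" by (rule lim_const_over_n)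
  qed simp
  have lim: "(\<lambda>n. 1 / sqrt (1 + e n)) \<longlonglongrightarrow> 1"
    using tendsto_divide[OF tendsto_const tendsto_real_sqrt[OF tendsto_add[OF tendsto_const e0]], of 1 1] by simp
  have ev: "\<forall>\<^sub>F n in sequentially. n \<ge> 2" by (rule eventually_ge_at_top)
  show "(\<lambda>n. char_norm n (\<lambda>p. c n * reg_char n p) / char_norm n (perm_char n (Y n))) \<longlonglongrightarrow> 1"
    by (rule Lim_transform_eventually[OF lim]) (use ev in \<open>eventually_elim, use pn in auto\<close>)
  show "(\<lambda>n. char_inner n (reg_char n) (perm_char n (Y n))
               / (char_norm n (reg_char n) * char_norm n (perm_char n (Y n)))) \<longlonglongrightarrow> 1"
    by (rule Lim_transform_eventually[OF lim]) (use ev in \<open>eventually_elim, use pn in auto\<close>)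
qed

theorem mainTheorem19:
  fixes k :: "nat \<Rightarrow> nat"
  assumes "\<forall>n\<ge>1. k n < n"
    and "(\<exists>M. \<forall>n. k n \<le> M) \<or> filterlim k at_top sequentially"
  shows "((\<lambda>n. char_norm n (\<lambda>\<pi>. real (n choose k n) * reg_char n \<pi>)
               / char_norm n (perm_char n (Xnk n (k n)))) \<longlonglongrightarrow> 1)
    \<and> ((\<lambda>n. char_norm n (\<lambda>\<pi>. 2 ^ n * reg_char n \<pi>)
               / char_norm n (perm_char n (Bn n))) \<longlonglongrightarrow> 1)
    \<and> ((\<lambda>n. char_inner n (reg_char n) (perm_char n (Xnk n (k n)))
               / (char_norm n (reg_char n) * char_norm n (perm_char n (Xnk n (k n))))) \<longlonglongrightarrow> 1)
    \<and> ((\<lambda>n. char_inner n (reg_char n) (perm_char n (Bn n))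
               / (char_norm n (reg_char n) * char_norm n (perm_char n (Bn n)))) \<longlonglongrightarrow> 1)"
proof -
  define Ek where "Ek n = {E. E \<subseteq> {..<n} \<and> card E = k n}" for n
  have cX: "card (Ek n) = n choose k n" for n by (simp add: Ek_def n_subsets)
  note LX = limit_general[of "\<lambda>n. Xnk n (k n)" Ek "\<lambda>n. real (n choose k n)"]
  have hX: "\<And>n. Xnk n (k n) = (\<lambda>(s, E). Mat n s E) ` ({s. s permutes {..<n}} \<times> Ek n)"
    "\<And>n. Ek n \<subseteq> Pow {..<n}" "\<And>n. real (n choose k n) = real (card (Ek n))"
    "\<And>n. n \<ge> 2 \<Longrightarrow> real (n choose k n) > 0" "\<And>n. card (Xnk n (k n)) = fact n * card (Ek n)"
       apply (simp add: Xnk_eq Ek_def)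
      apply (auto simp: Ek_def)[1]
     apply (simp add: cX)
    using assms(1) apply (simp add: zero_less_binomial_iff less_imp_le)
    by (simp add: card_Xnk cX)
  note LB = limit_general[of "\<lambda>n. Bn n" "\<lambda>n. Pow {..<n}" "\<lambda>n. 2 ^ n"]
  have hB: "\<And>n. Bn n = (\<lambda>(s, E). Mat n s E) ` ({s. s permutes {..<n}} \<times> Pow {..<n})"
    "\<And>n. Pow {..<n} \<subseteq> Pow {..<n}" "\<And>n. (2::real) ^ n = real (card (Pow {..<n::nat}))"
    "\<And>n. n \<ge> 2 \<Longrightarrow> (2::real) ^ n > 0" "\<And>n. card (Bn n) = fact n * card (Pow {..<n::nat})"
        apply (rule Bn_eq)
       apply simp
      apply (simp add: card_Pow)
     apply simp
    by (simp add: card_Bn card_Pow)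
  show ?thesis using LX[OF hX] LB[OF hB] by blast
qed


end
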